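(* Let $(X,\rho)$ be a separable metric space, $\mu$ a measure on $X$, and $\delta:\mathrm{Lip}_b(X)\to L^\infty(X,\mu)$ a linear operator. (1) If $\delta\in\Upsilon(X,\mu)$, then $\delta$ is a bounded operator (from $(\mathrm{Lip}_b(X),\|\cdot\|_{\mathrm{Lip}})$ to $L^\infty(X,\mu)$). (2) $\delta\in\Upsilon(X,\mu)$ if and only if $\delta$ satisfies the Leibniz rule and is sequentially weak-* continuous, i.e. $f_i\to f$ weak-* in $\mathrm{Lip}_b(X)$ for a sequence implies $\delta f_i\to\delta f$ weak-* in $L^\infty(X,\mu)$.
   Context: $\mathrm{Lip}_b(X)$ is the Banach space of bounded Lipschitz functions with norm $\|f\|_{\mathrm{Lip}}=\max(\sup|f|,L(f))$, $L(f)$ the Lipschitz constant. It is a dual Banach space (its predual is an Arens–Eells type space), and a bounded net converges weak-* in $\mathrm{Lip}_b(X)$ iff it converges pointwise. A derivation is a linear map $\delta:\mathrm{Lip}_b(X)\to L^\infty(X,\mu)$ satisfying the Leibniz rule $\delta(fg)=f\delta g+g\delta f$ and such that whenever $(f_\alpha)$ is a bounded net with $f_\alpha\to f$ weak-* in $\mathrm{Lip}_b(X)$, then $\delta f_\alpha\to\delta f$ weak-* in $L^\infty(X,\mu)$. $\Upsilon(X,\mu)$ is the set of derivations. *)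

theory Defs
  imports "HOL-Analysis.Analysis" "HOL-Probability.Probability"
begin

definition lipb :: "('a::metric_space \<Rightarrow> real) set" where
  "lipb = {f. bounded (range f) \<and> (\<exists>C. \<forall>x y. \<bar>f x - f y\<bar> \<le> C * dist x y)}"

definition lip_const :: "('a::metric_space \<Rightarrow> real) \<Rightarrow> real" where
  "lip_const f = Sup ({0} \<union> {\<bar>f x - f y\<bar> / dist x y | x y. x \<noteq> y})"

definition lip_norm :: "('a::metric_space \<Rightarrow> real) \<Rightarrow> real" where
  "lip_norm f = max (SUP x. \<bar>f x\<bar>) (lip_const f)"

text \<open>Weak-* convergence in Lip_b(X) of a bounded net, with nets encoded as filters
  on Lip_b(X): by the standing fact, a bounded net converges weak-* iff it converges
  pointwise.\<close>
definition lip_bounded_wstar :: "('a::metric_space \<Rightarrow> real) filter \<Rightarrow> ('a \<Rightarrow> real) \<Rightarrow> bool" where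
  "lip_bounded_wstar F f \<longleftrightarrow>
     f \<in> lipb \<and> (\<exists>B. eventually (\<lambda>g. g \<in> lipb \<and> lip_norm g \<le> B) F) \<and>
     (\<forall>x. ((\<lambda>g. g x) \<longlongrightarrow> f x) F)"

text \<open>Weak-* convergence in L^\<infinity>(X,\<mu>) = (L^1(X,\<mu>))^* (\<mu> \<sigma>-finite), of the filter-indexed family \<open>\<lambda>i. u i\<close>.\<close>
definition linf_wstar :: "'a measure \<Rightarrow> ('i \<Rightarrow> 'a \<Rightarrow> real) \<Rightarrow> ('a \<Rightarrow> real) \<Rightarrow> 'i filter \<Rightarrow> bool" where
  "linf_wstar M u v F \<longleftrightarrow>
     (\<forall>h. integrable M h \<longrightarrow>
        ((\<lambda>i. integral\<^sup>L M (\<lambda>x. u i x * h x)) \<longlongrightarrow> integral\<^sup>L M (\<lambda>x. v x * h x)) F)"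

definition linf :: "'a measure \<Rightarrow> ('a \<Rightarrow> real) set" where
  "linf M = {g. g \<in> borel_measurable M \<and> (\<exists>C. AE x in M. \<bar>g x\<bar> \<le> C)}"

definition linf_linear_op :: "'a::metric_space measure \<Rightarrow> (('a \<Rightarrow> real) \<Rightarrow> ('a \<Rightarrow> real)) \<Rightarrow> bool" where
  "linf_linear_op M \<delta> \<longleftrightarrow>
     (\<forall>f\<in>lipb. \<delta> f \<in> linf M) \<and>
     (\<forall>f\<in>lipb. \<forall>g\<in>lipb. \<forall>a b::real.
        AE x in M. \<delta> (\<lambda>y. a * f y + b * g y) x = a * \<delta> f x + b * \<delta> g x)"

definition leibniz :: "'a::metric_space measure \<Rightarrow> (('a \<Rightarrow> real) \<Rightarrow> ('a \<Rightarrow> real)) \<Rightarrow> bool" where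
  "leibniz M \<delta> \<longleftrightarrow>
     (\<forall>f\<in>lipb. \<forall>g\<in>lipb. AE x in M. \<delta> (\<lambda>y. f y * g y) x = f x * \<delta> g x + g x * \<delta> f x)"

definition derivation :: "'a::metric_space measure \<Rightarrow> (('a \<Rightarrow> real) \<Rightarrow> ('a \<Rightarrow> real)) \<Rightarrow> bool" where
  "derivation M \<delta> \<longleftrightarrow> linf_linear_op M \<delta> \<and> leibniz M \<delta> \<and>
     (\<forall>F f. lip_bounded_wstar F f \<longrightarrow> linf_wstar M \<delta> (\<delta> f) F)"

text \<open>Weak-* convergence of a sequence in Lip_b(X): weak-* convergent sequences are norm
  bounded (uniform boundedness), so by the standing fact this is bounded + pointwise.\<close>
definition lip_seq_wstar :: "(nat \<Rightarrow> 'a::metric_space \<Rightarrow> real) \<Rightarrow> ('a \<Rightarrow> real) \<Rightarrow> bool" where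
  "lip_seq_wstar fs f \<longleftrightarrow> (\<forall>i. fs i \<in> lipb) \<and> f \<in> lipb \<and> (\<exists>B. \<forall>i. lip_norm (fs i) \<le> B) \<and>
     (\<forall>x. (\<lambda>i. fs i x) \<longlonglongrightarrow> f x)"

definition seq_wstar_continuous :: "'a::metric_space measure \<Rightarrow> (('a \<Rightarrow> real) \<Rightarrow> ('a \<Rightarrow> real)) \<Rightarrow> bool" where
  "seq_wstar_continuous M \<delta> \<longleftrightarrow>
     (\<forall>fs f. lip_seq_wstar fs f \<longrightarrow> linf_wstar M (\<lambda>i. \<delta> (fs i)) (\<delta> f) sequentially)"

definition bounded_op :: "'a::metric_space measure \<Rightarrow> (('a \<Rightarrow> real) \<Rightarrow> ('a \<Rightarrow> real)) \<Rightarrow> bool" where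
  "bounded_op M \<delta> \<longleftrightarrow> (\<exists>C. \<forall>f\<in>lipb. AE x in M. \<bar>\<delta> f x\<bar> \<le> C * lip_norm f)"

end

theory Submission
  imports Defs
begin


lemma AE_summable_norm:
  fixes f :: "nat \<Rightarrow> 'a \<Rightarrow> real"
  assumes int: "\<And>i. integrable M (f i)"
    and sums: "summable (\<lambda>i. (\<integral>x. norm (f i x) \<partial>M))"
  shows "AE x in M. summable (\<lambda>i. norm (f i x))"
proof -
  have meas[measurable]: "\<And>i. f i \<in> borel_measurable M" using int by auto
  have "(\<integral>\<^sup>+ x. (\<Sum>i. ennreal (norm (f i x))) \<partial>M) = (\<Sum>i. \<integral>\<^sup>+ x. norm (f i x) \<partial>M)"
    by (intro nn_integral_suminf) auto
  also have "\<dots> = (\<Sum>i. ennreal (\<integral>x. norm (f i x) \<partial>M))"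
    by (intro arg_cong[where f=suminf] ext nn_integral_eq_integral integrable_norm int) auto
  also have "\<dots> \<noteq> \<infinity>"
    using ennreal_suminf_neq_top[OF sums integral_nonneg_AE[OF AE_I2[OF norm_ge_zero]]] by simp
  finally have "AE x in M. (\<Sum>i. ennreal (norm (f i x))) \<noteq> \<infinity>"
    by (intro nn_integral_PInf_AE) auto
  then show ?thesis
    by eventually_elim (auto intro: summable_suminf_not_top)
qed



lemma lipb_D:
  assumes "f \<in> lipb"
  obtains C where "C \<ge> 0" "\<And>x y. \<bar>f x - f y\<bar> \<le> C * dist x y" "bdd_above (range (\<lambda>x. \<bar>f x\<bar>))"
proof -
  from assms obtain C where C: "\<forall>x y. \<bar>f x - f y\<bar> \<le> C * dist x y" and b: "bounded (range f)"
    unfolding lipb_def by auto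
  have "\<bar>f x - f y\<bar> \<le> \<bar>C\<bar> * dist x y" for x y
    using C[rule_format, of x y] by (smt (verit) mult_right_mono zero_le_dist)
  moreover have "bdd_above (range (\<lambda>x. \<bar>f x\<bar>))"
    using b unfolding bounded_iff bdd_above_def by (auto simp: real_norm_def)
  ultimately show ?thesis using that[of "\<bar>C\<bar>"] by auto
qed

lemma lip_set_bdd:
  assumes "f \<in> lipb"
  shows "bdd_above ({0} \<union> {\<bar>f x - f y\<bar> / dist x y | x y. x \<noteq> y})"
proof -
  obtain C where C: "C \<ge> 0" "\<And>x y. \<bar>f x - f y\<bar> \<le> C * dist x y" "bdd_above (range (\<lambda>x. \<bar>f x\<bar>))" by (rule lipb_D[OF assms]) (rule that, auto)
  have "\<bar>f x - f y\<bar> / dist x y \<le> C" if "x \<noteq> y" for x y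
    using C(2)[of x y] that by (simp add: pos_divide_le_eq)
  then show ?thesis using C(1) by (intro bdd_aboveI[of _ C]) auto
qed

lemma lip_const_nonneg: "f \<in> lipb \<Longrightarrow> 0 \<le> lip_const f"
  unfolding lip_const_def by (rule cSup_upper[OF _ lip_set_bdd]) auto

lemma lip_const_le: "f \<in> lipb \<Longrightarrow> \<bar>f x - f y\<bar> \<le> lip_const f * dist x y"
proof (cases "x = y")
  case False
  assume f: "f \<in> lipb"
  have "\<bar>f x - f y\<bar> / dist x y \<le> lip_const f"
    unfolding lip_const_def using False by (intro cSup_upper[OF _ lip_set_bdd[OF f]]) auto
  then show ?thesis using False by (simp add: divide_le_eq)
qed simp

lemma sup_le: assumes "f \<in> lipb" shows "\<bar>f x\<bar> \<le> (SUP x. \<bar>f x\<bar>)"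
proof -
  obtain C where "C \<ge> 0" "\<And>x y. \<bar>f x - f y\<bar> \<le> C * dist x y" "bdd_above (range (\<lambda>x. \<bar>f x\<bar>))" by (rule lipb_D[OF assms]) (rule that, auto)
  then show ?thesis by (intro cSUP_upper) auto
qed

lemma lip_norm_ge1: "f \<in> lipb \<Longrightarrow> \<bar>f x - f y\<bar> \<le> lip_norm f * dist x y"
proof -
  assume f: "f \<in> lipb"
  have "lip_const f \<le> lip_norm f" unfolding lip_norm_def by simp
  then have "lip_const f * dist x y \<le> lip_norm f * dist x y" by (rule mult_right_mono) simp
  with lip_const_le[OF f, of x y] show ?thesis by (rule order_trans)
qed

lemma lip_norm_ge2: "f \<in> lipb \<Longrightarrow> \<bar>f x\<bar> \<le> lip_norm f"
  using sup_le[of f x] unfolding lip_norm_def by (simp add: le_max_iff_disj)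

lemma lip_norm_ge3: "f \<in> lipb \<Longrightarrow> 0 \<le> lip_norm f"
  using lip_const_nonneg[of f] unfolding lip_norm_def by (simp add: le_max_iff_disj)

lemmas lip_norm_ge = lip_norm_ge1 lip_norm_ge2 lip_norm_ge3

lemma scale_lipb: assumes f: "f \<in> lipb" shows "(\<lambda>x. c * f x) \<in> lipb"
proof -
  obtain C where C0: "C \<ge> 0" and C: "\<And>x y. \<bar>f x - f y\<bar> \<le> C * dist x y" "bdd_above (range (\<lambda>x. \<bar>f x\<bar>))"
    by (rule lipb_D[OF f]) (rule that, auto)
  then obtain K where K: "\<And>x. \<bar>f x\<bar> \<le> K" unfolding bdd_above_def by auto
  have "\<bar>c * f x - c * f y\<bar> \<le> (\<bar>c\<bar> * C) * dist x y" for x y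
  proof -
    have "\<bar>c * f x - c * f y\<bar> = \<bar>c\<bar> * \<bar>f x - f y\<bar>" by (simp add: abs_mult flip: right_diff_distrib)
    also have "\<dots> \<le> \<bar>c\<bar> * (C * dist x y)" using C(1)[of x y] by (rule mult_left_mono) simp
    finally show ?thesis by (simp add: mult.assoc)
  qed
  moreover have "bounded (range (\<lambda>x. c * f x))"
    unfolding bounded_iff using K by (auto simp: abs_mult intro!: exI[of _ "\<bar>c\<bar> * K"] mult_left_mono)
  ultimately show ?thesis unfolding lipb_def by blast
qed

lemma scale_lip_norm: assumes f: "f \<in> lipb" and c: "0 \<le> c"
  shows "lip_norm (\<lambda>x. c * f x) \<le> c * lip_norm f"
proof -
  have g: "(\<lambda>x. c * f x) \<in> lipb" by (rule scale_lipb[OF f])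
  have 1: "(SUP x. \<bar>c * f x\<bar>) \<le> c * lip_norm f"
    by (rule cSUP_least) (auto simp: abs_mult c intro!: mult_left_mono lip_norm_ge[OF f])
  have 2: "lip_const (\<lambda>x. c * f x) \<le> c * lip_norm f"
    unfolding lip_const_def
  proof (rule cSup_least)
    fix z assume "z \<in> {0} \<union> {\<bar>c * f x - c * f y\<bar> / dist x y | x y. x \<noteq> y}"
    then show "z \<le> c * lip_norm f"
    proof
      assume "z \<in> {0}" then show ?thesis using c lip_norm_ge(3)[OF f] by simp
    next
      assume "z \<in> {\<bar>c * f x - c * f y\<bar> / dist x y | x y. x \<noteq> y}"
      then obtain x y where z: "z = \<bar>c * f x - c * f y\<bar> / dist x y" "x \<noteq> y" by blast
      have "\<bar>c * f x - c * f y\<bar> = c * \<bar>f x - f y\<bar>" using c by (simp add: abs_mult flip: right_diff_distrib)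
      also have "\<dots> \<le> c * (lip_norm f * dist x y)" by (intro mult_left_mono lip_norm_ge[OF f] c)
      finally show ?thesis using z by (simp add: divide_le_eq mult.assoc)
    qed
  qed auto
  show ?thesis using 1 2 unfolding lip_norm_def by simp
qed



lemma stepA:
  fixes u :: "'a \<Rightarrow> real"
  assumes sf: "sigma_finite_measure M" and um[measurable]: "u \<in> borel_measurable M"
    and ub: "AE x in M. \<bar>u x\<bar> \<le> B"
    and nae: "\<not> (AE x in M. \<bar>u x\<bar> \<le> C)" and C: "0 \<le> C"
  shows "\<exists>h. integrable M h \<and> (\<integral>x. \<bar>h x\<bar> \<partial>M) \<le> 1 \<and> C \<le> (\<integral>x. u x * h x \<partial>M)"
proof -
  define E where "E = {x\<in>space M. C < \<bar>u x\<bar>}"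
  have E[measurable]: "E \<in> sets M" unfolding E_def by measurable
  obtain A :: "nat \<Rightarrow> 'a set" where A: "range A \<subseteq> sets M" "(\<Union>i. A i) = space M"
    "\<And>i. emeasure M (A i) \<noteq> \<infinity>"
    using sigma_finite_measure.sigma_finite_incseq[OF sf] by metis
  have "\<exists>i. emeasure M (E \<inter> A i) \<noteq> 0"
  proof (rule ccontr)
    assume "\<not> ?thesis"
    then have "\<And>i. E \<inter> A i \<in> null_sets M" using A E by auto
    then have "(\<Union>i. E \<inter> A i) \<in> null_sets M" by blast
    moreover have "(\<Union>i. E \<inter> A i) = E" using A(2) E_def by auto
    ultimately have "E \<in> null_sets M" by simp
    then have "AE x in M. \<bar>u x\<bar> \<le> C" by (rule AE_I') (auto simp: E_def)
    then show False using nae by simp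
  qed
  then obtain i where i: "emeasure M (E \<inter> A i) \<noteq> 0" by blast
  define G where "G = E \<inter> A i"
  have G[measurable]: "G \<in> sets M" using A E unfolding G_def by auto
  have Gfin: "emeasure M G \<noteq> \<infinity>"
  proof -
    have "emeasure M G \<le> emeasure M (A i)" unfolding G_def using A by (intro emeasure_mono) auto
    then show ?thesis using A(3)[of i] by (auto simp: top_unique)
  qed
  then have Glt: "emeasure M G < \<infinity>" by (simp add: less_top)
  define m where "m = measure M G"
  have "emeasure M G = ennreal m" unfolding m_def by (rule emeasure_eq_ennreal_measure) (use Gfin in simp)
  then have "m \<noteq> 0" using i unfolding G_def by auto
  then have m: "0 < m" using measure_nonneg[of M G] unfolding m_def by linarith
  define h where "h x = indicator G x * sgn (u x) / m" for x
  have ii: "integrable M (\<lambda>x. indicator G x / m)"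
    using G Glt by (intro integrable_divide_zero integrable_real_indicator) auto
  have h_le: "\<bar>h x\<bar> \<le> indicator G x / m" for x
    unfolding h_def using m by (auto simp: indicator_def abs_mult abs_sgn_eq)
  have hi: "integrable M h"
  proof (rule Bochner_Integration.integrable_bound[OF ii])
    show "h \<in> borel_measurable M" unfolding h_def by measurable
    show "AE x in M. norm (h x) \<le> norm (indicator G x / m)"
      using h_le m by (intro AE_I2) (simp add: abs_of_nonneg)
  qed
  have "(\<integral>x. \<bar>h x\<bar> \<partial>M) \<le> (\<integral>x. indicator G x / m \<partial>M)"
    by (intro integral_mono hi ii integrable_abs h_le)
  also have "\<dots> = 1" using m G by (simp add: m_def)
  finally have 1: "(\<integral>x. \<bar>h x\<bar> \<partial>M) \<le> 1" .
  have ui: "integrable M (\<lambda>x. u x * h x)"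
  proof (rule Bochner_Integration.integrable_bound[OF integrable_mult_right[OF ii, of "\<bar>B\<bar>"]])
    show "(\<lambda>x. u x * h x) \<in> borel_measurable M" using hi by measurable
    show "AE x in M. norm (u x * h x) \<le> norm (\<bar>B\<bar> * (indicator G x / m))"
      using ub
    proof eventually_elim
      fix x assume "\<bar>u x\<bar> \<le> B"
      then have "\<bar>u x\<bar> * \<bar>h x\<bar> \<le> \<bar>B\<bar> * (indicator G x / m)"
        using h_le[of x] by (intro mult_mono) auto
      then show "norm (u x * h x) \<le> norm (\<bar>B\<bar> * (indicator G x / m))"
        using m by (simp add: abs_mult)
    qed
  qed
  have "(\<integral>x. C * (indicator G x / m) \<partial>M) \<le> (\<integral>x. u x * h x \<partial>M)"
  proof (intro integral_mono ui integrable_mult_right ii)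
    fix x
    show "C * (indicator G x / m) \<le> u x * h x"
    proof (cases "x \<in> G")
      case True
      then have "C < \<bar>u x\<bar>" unfolding G_def E_def by auto
      moreover have "u x * sgn (u x) = \<bar>u x\<bar>" by (auto simp: sgn_if)
      ultimately show ?thesis using True m unfolding h_def
        by (simp add: divide_right_mono mult.assoc[symmetric] less_imp_le)
    qed (simp add: h_def)
  qed
  also have "(\<integral>x. C * (indicator G x / m) \<partial>M) = C" using m G by (simp add: m_def)
  finally show ?thesis using hi 1 by blast
qed



lemma bmul:
  fixes u g :: "'a \<Rightarrow> real"
  assumes g: "integrable M g" and u[measurable]: "u \<in> borel_measurable M" and B: "AE x in M. \<bar>u x\<bar> \<le> B"
  shows "integrable M (\<lambda>x. u x * g x)" "\<bar>\<integral>x. u x * g x \<partial>M\<bar> \<le> \<bar>B\<bar> * (\<integral>x. \<bar>g x\<bar> \<partial>M)"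
proof -
  have gm[measurable]: "g \<in> borel_measurable M" using g by auto
  have ae: "AE x in M. \<bar>u x * g x\<bar> \<le> \<bar>B\<bar> * \<bar>g x\<bar>"
    using B by eventually_elim (auto simp: abs_mult intro: mult_right_mono)
  show i: "integrable M (\<lambda>x. u x * g x)"
    by (rule Bochner_Integration.integrable_bound[OF integrable_mult_right[OF integrable_abs[OF g], of "\<bar>B\<bar>"]])
       (use ae in \<open>auto simp: abs_mult\<close>)
  have "\<bar>\<integral>x. u x * g x \<partial>M\<bar> \<le> (\<integral>x. \<bar>u x * g x\<bar> \<partial>M)"
    using integral_norm_bound[of M "\<lambda>x. u x * g x"] by simp
  also have "\<dots> \<le> (\<integral>x. \<bar>B\<bar> * \<bar>g x\<bar> \<partial>M)"
    by (intro integral_mono_AE ae integrable_abs i integrable_mult_right g)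
  also have "\<dots> = \<bar>B\<bar> * (\<integral>x. \<bar>g x\<bar> \<partial>M)" by simp
  finally show "\<bar>\<integral>x. u x * g x \<partial>M\<bar> \<le> \<bar>B\<bar> * (\<integral>x. \<bar>g x\<bar> \<partial>M)" .
qed

lemma UB:
  fixes S :: "('a \<Rightarrow> real) set"
  assumes sf: "sigma_finite_measure M"
    and Sm: "\<forall>u\<in>S. u \<in> borel_measurable M \<and> (\<exists>B. AE x in M. \<bar>u x\<bar> \<le> B)"
    and Sw: "\<forall>h. integrable M h \<longrightarrow> (\<exists>K. \<forall>u\<in>S. \<bar>\<integral>x. u x * h x \<partial>M\<bar> \<le> K)"
  shows "\<exists>C. \<forall>u\<in>S. AE x in M. \<bar>u x\<bar> \<le> C"
proof (rule ccontr)
  assume neg: "\<not> ?thesis"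
  have "\<forall>C. \<exists>p. fst p \<in> S \<and> integrable M (snd p) \<and> (\<integral>x. \<bar>snd p x\<bar> \<partial>M) \<le> 1
           \<and> C \<le> (\<integral>x. fst p x * snd p x \<partial>M)"
  proof
    fix C
    obtain u where u: "u \<in> S" "\<not> (AE x in M. \<bar>u x\<bar> \<le> max C 0)" using neg by blast
    obtain B where B: "AE x in M. \<bar>u x\<bar> \<le> B" using Sm u by blast
    obtain h where "integrable M h \<and> (\<integral>x. \<bar>h x\<bar> \<partial>M) \<le> 1 \<and> max C 0 \<le> (\<integral>x. u x * h x \<partial>M)"
      using stepA[OF sf _ B u(2)] Sm u by auto
    then show "\<exists>p. fst p \<in> S \<and> integrable M (snd p) \<and> (\<integral>x. \<bar>snd p x\<bar> \<partial>M) \<le> 1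
           \<and> C \<le> (\<integral>x. fst p x * snd p x \<partial>M)"
      using u by (intro exI[of _ "(u, h)"]) auto
  qed
  then obtain sel where sel: "\<And>C. fst (sel C) \<in> S" "\<And>C. integrable M (snd (sel C))"
    "\<And>C. (\<integral>x. \<bar>snd (sel C) x\<bar> \<partial>M) \<le> 1" "\<And>C. C \<le> (\<integral>x. fst (sel C) x * snd (sel C) x \<partial>M)"
    by metis
  obtain Bd where Bd: "\<And>u. u \<in> S \<Longrightarrow> AE x in M. \<bar>u x\<bar> \<le> Bd u" using Sm by metis
  obtain Kd where Kd: "\<And>h u. integrable M h \<Longrightarrow> u \<in> S \<Longrightarrow> \<bar>\<integral>x. u x * h x \<partial>M\<bar> \<le> Kd h"
    using Sw by metis
  define ep where "ep j Q = (1/2)^(j+1) / (1 + Q)" for j :: nat and Q :: real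
  define cc where "cc j P Q = (real j + 1 + P) / ep j Q" for j P Q
  define st where "st = rec_nat (0::real, 0::real)
     (\<lambda>j s. (fst s + ep j (snd s) * \<bar>Kd (snd (sel (cc j (fst s) (snd s))))\<bar>,
             snd s + \<bar>Bd (fst (sel (cc j (fst s) (snd s))))\<bar>))"
  define P where "P j = fst (st j)" for j
  define Q where "Q j = snd (st j)" for j
  define e where "e j = ep j (Q j)" for j
  define u where "u j = fst (sel (cc j (P j) (Q j)))" for j
  define hh where "hh j = snd (sel (cc j (P j) (Q j)))" for j
  have P0: "P 0 = 0" and Q0: "Q 0 = 0" unfolding P_def Q_def st_def by auto
  have PS: "P (Suc j) = P j + e j * \<bar>Kd (hh j)\<bar>" for j
    unfolding P_def Q_def st_def e_def hh_def by simp
  have QS: "Q (Suc j) = Q j + \<bar>Bd (u j)\<bar>" for j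
    unfolding P_def Q_def st_def u_def by simp
  have uS: "u j \<in> S" for j unfolding u_def by (rule sel)
  have hi: "integrable M (hh j)" for j unfolding hh_def by (rule sel)
  have h1: "(\<integral>x. \<bar>hh j x\<bar> \<partial>M) \<le> 1" for j unfolding hh_def by (rule sel)
  have uh: "(real j + 1 + P j) / e j \<le> (\<integral>x. u j x * hh j x \<partial>M)" for j
    unfolding u_def hh_def e_def cc_def[symmetric] by (rule sel)
  have Qnn: "0 \<le> Q j" for j by (induction j) (auto simp: Q0 QS)
  have Qmono: "incseq Q" by (rule incseq_SucI) (simp add: QS)
  have epos: "0 < e j" for j unfolding e_def ep_def using Qnn[of j] by simp
  have eQ: "e j * (1 + Q j) = (1/2)^(j+1)" for j
  proof -
    have "1 + Q j \<noteq> 0" using Qnn[of j] by linarith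
    then show ?thesis unfolding e_def ep_def by (simp del: power_Suc)
  qed
  have ele: "e j \<le> (1/2)^(j+1)" for j
  proof -
    have "e j * 1 \<le> e j * (1 + Q j)" using epos[of j] Qnn[of j] by (intro mult_left_mono) auto
    then show ?thesis using eQ[of j] by simp
  qed
  have Psum: "P j = (\<Sum>i<j. e i * \<bar>Kd (hh i)\<bar>)" for j by (induction j) (auto simp: P0 PS)
  have BQ: "\<bar>Bd (u j)\<bar> \<le> Q i" if "j < i" for i j
  proof -
    have "\<bar>Bd (u j)\<bar> \<le> Q (Suc j)" using Qnn[of j] by (simp add: QS)
    also have "\<dots> \<le> Q i" using Qmono that by (simp add: incseq_def)
    finally show ?thesis .
  qed
  have um[measurable]: "u j \<in> borel_measurable M" for j using Sm uS by blast
  have uB: "AE x in M. \<bar>u j x\<bar> \<le> Bd (u j)" for j using Bd uS by blast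
  define g where "g i x = e i * hh i x" for i x
  have gi: "integrable M (g i)" for i unfolding g_def by (intro integrable_mult_right hi)
  have gn: "(\<integral>x. norm (g i x) \<partial>M) \<le> (1/2)^(i+1)" for i
  proof -
    have "(\<integral>x. norm (g i x) \<partial>M) = e i * (\<integral>x. \<bar>hh i x\<bar> \<partial>M)"
      unfolding g_def using epos[of i] by (simp add: abs_mult)
    also have "\<dots> \<le> e i * 1" using epos[of i] h1[of i] by (intro mult_left_mono) auto
    finally show ?thesis using ele[of i] by simp
  qed
  have geo: "summable (\<lambda>i::nat. (1/2::real)^(i+1))" by (simp add: summable_geometric)
  have gsum: "summable (\<lambda>i. \<integral>x. norm (g i x) \<partial>M)"
    by (rule summable_comparison_test'[OF geo, of 0]) (use gn in simp)
  define h where "h x = (\<Sum>i. g i x)" for x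
  have hint: "integrable M h" unfolding h_def
    by (rule integrable_suminf[OF gi AE_summable_norm[OF gi gsum] gsum])
  obtain K where K: "\<And>j. \<bar>\<integral>x. u j x * h x \<partial>M\<bar> \<le> K" using Kd[OF hint] uS by blast
  have big: "real j \<le> \<bar>\<integral>x. u j x * h x \<partial>M\<bar>" for j
  proof -
    define f where "f i x = u j x * g i x" for i x
    have fi: "integrable M (f i)" for i unfolding f_def by (rule bmul(1)[OF gi um uB])
    have fb: "\<bar>integral\<^sup>L M (f i)\<bar> \<le> \<bar>Bd (u j)\<bar> * (\<integral>x. \<bar>g i x\<bar> \<partial>M)" for i
      unfolding f_def by (rule bmul(2)[OF gi um uB])
    have fn: "(\<integral>x. norm (f i x) \<partial>M) \<le> \<bar>Bd (u j)\<bar> * (1/2)^(i+1)" for i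
    proof -
      have "(\<integral>x. norm (f i x) \<partial>M) = \<bar>\<integral>x. \<bar>u j x\<bar> * \<bar>g i x\<bar> \<partial>M\<bar>"
        unfolding f_def by (simp add: abs_mult)
      also have "\<dots> \<le> \<bar>Bd (u j)\<bar> * (\<integral>x. \<bar>\<bar>g i x\<bar>\<bar> \<partial>M)"
        by (rule bmul(2)[OF integrable_abs[OF gi]]) (use uB in auto)
      also have "\<dots> \<le> \<bar>Bd (u j)\<bar> * (1/2)^(i+1)" using gn[of i] by (intro mult_left_mono) auto
      finally show ?thesis .
    qed
    have fsum: "summable (\<lambda>i. \<integral>x. norm (f i x) \<partial>M)"
      by (rule summable_comparison_test'[OF summable_mult[OF geo, of "\<bar>Bd (u j)\<bar>"], of 0]) (use fn in simp)
    have eq1: "(\<integral>x. u j x * h x \<partial>M) = (\<integral>x. (\<Sum>i. f i x) \<partial>M)"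
    proof (rule integral_cong_AE)
      show "(\<lambda>x. u j x * h x) \<in> borel_measurable M" using hint by measurable
      show "(\<lambda>x. \<Sum>i. f i x) \<in> borel_measurable M"
        using integrable_suminf[OF fi AE_summable_norm[OF fi fsum] fsum] by auto
      show "AE x in M. u j x * h x = (\<Sum>i. f i x)"
        using AE_summable_norm[OF gi gsum]
      proof eventually_elim
        fix x assume "summable (\<lambda>i. norm (g i x))"
        then have "summable (\<lambda>i. g i x)" by (rule summable_norm_cancel)
        then show "u j x * h x = (\<Sum>i. f i x)" unfolding h_def f_def by (simp add: suminf_mult)
      qed
    qed
    define a where "a i = integral\<^sup>L M (f i)" for i
    have eq2: "(\<integral>x. u j x * h x \<partial>M) = (\<Sum>i. a i)" unfolding eq1 a_def
      by (rule integral_suminf[OF fi AE_summable_norm[OF fi fsum] fsum])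
    have asum: "summable a" unfolding a_def
      by (rule summable_integral[OF fi AE_summable_norm[OF fi fsum] fsum])
    have a_eq: "a i = e i * (\<integral>x. u j x * hh i x \<partial>M)" for i
      unfolding a_def f_def g_def by (simp add: mult.left_commute)
    have a_low: "\<bar>a i\<bar> \<le> e i * \<bar>Kd (hh i)\<bar>" for i
    proof -
      have "\<bar>a i\<bar> = e i * \<bar>\<integral>x. u j x * hh i x \<partial>M\<bar>" using epos[of i] by (simp add: a_eq abs_mult)
      also have "\<dots> \<le> e i * \<bar>Kd (hh i)\<bar>" using Kd[OF hi[of i] uS[of j]] epos[of i]
        by (intro mult_left_mono) auto
      finally show ?thesis .
    qed
    have a_high: "\<bar>a i\<bar> \<le> (1/2)^(i+1)" if "j < i" for i
    proof -
      have "\<bar>a i\<bar> \<le> \<bar>Bd (u j)\<bar> * (\<integral>x. \<bar>g i x\<bar> \<partial>M)" using fb unfolding a_def .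
      also have "\<dots> \<le> Q i * (e i * 1)"
      proof (intro mult_mono)
        show "\<bar>Bd (u j)\<bar> \<le> Q i" by (rule BQ[OF that])
        show "(\<integral>x. \<bar>g i x\<bar> \<partial>M) \<le> e i * 1"
          unfolding g_def using epos[of i] h1[of i] by (simp add: abs_mult)
      qed (auto simp: Qnn)
      also have "\<dots> \<le> e i * (1 + Q i)" using mult_left_mono[of "Q i" "1 + Q i" "e i"] epos[of i] by (simp add: mult.commute)
      finally show ?thesis using eQ[of i] by simp
    qed
    have aj: "real j + 1 + P j \<le> a j"
    proof -
      have "(real j + 1 + P j) = e j * ((real j + 1 + P j) / e j)" using epos[of j] by simp
      also have "\<dots> \<le> e j * (\<integral>x. u j x * hh j x \<partial>M)" using uh[of j] epos[of j]
        by (intro mult_left_mono) auto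
      finally show ?thesis by (simp add: a_eq)
    qed
    have split: "(\<Sum>i. a i) = (\<Sum>n. a (n + Suc j)) + (\<Sum>i<Suc j. a i)"
      by (rule suminf_split_initial_segment[OF asum])
    have tsum: "summable (\<lambda>n. a (n + Suc j))" using asum by (rule summable_ignore_initial_segment)
    have tail: "-1 \<le> (\<Sum>n. a (n + Suc j))"
    proof -
      have "(\<Sum>n. - ((1/2::real)^(n+1))) \<le> (\<Sum>n. a (n + Suc j))"
      proof (rule suminf_le[OF _ summable_minus[OF geo] tsum])
        fix n
        have "\<bar>a (n + Suc j)\<bar> \<le> (1/2)^(n + Suc j + 1)" by (rule a_high) simp
        also have "\<dots> \<le> (1/2)^(n+1)" by (intro power_decreasing) auto
        finally show "- ((1/2::real)^(n+1)) \<le> a (n + Suc j)" by linarith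
      qed
      moreover have "(\<Sum>n. - ((1/2::real)^(n+1))) = -1"
      proof -
        have "(\<Sum>n. (1/2::real)^(n+1)) = 1"
          using suminf_geometric[of "1/2::real"] suminf_mult[OF summable_geometric[of "1/2::real"], of "1/2"]
          by simp
        then show ?thesis using suminf_minus[OF geo] by simp
      qed
      ultimately show ?thesis by simp
    qed
    have init: "- P j \<le> (\<Sum>i<j. a i)"
    proof -
      have "\<bar>\<Sum>i<j. a i\<bar> \<le> (\<Sum>i<j. \<bar>a i\<bar>)" by (rule sum_abs)
      also have "\<dots> \<le> (\<Sum>i<j. e i * \<bar>Kd (hh i)\<bar>)" by (intro sum_mono a_low)
      finally show ?thesis unfolding Psum by linarith
    qed
    have "real j \<le> (\<Sum>i. a i)" using split tail init aj by simp
    then show ?thesis unfolding eq2 by linarith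
  qed
  obtain n :: nat where "K < real n" using reals_Archimedean2 by blast
  then show False using big[of n] K[of n] by linarith
qed

lemma zero_lipb: "(\<lambda>_. 0) \<in> lipb"
  unfolding lipb_def by (auto intro!: exI[of _ 0])

lemma delta_zero: assumes "linf_linear_op M \<delta>" shows "AE x in M. \<delta> (\<lambda>y. 0) x = 0"
proof -
  have "\<forall>f\<in>lipb. \<forall>g\<in>lipb. \<forall>a b::real. AE x in M. \<delta> (\<lambda>y. a * f y + b * g y) x = a * \<delta> f x + b * \<delta> g x"
    using assms unfolding linf_linear_op_def by blast
  from this[rule_format, OF zero_lipb zero_lipb, of 0 0] show ?thesis by simp
qed

lemma delta_scale: assumes "linf_linear_op M \<delta>" "f \<in> lipb" shows "AE x in M. \<delta> (\<lambda>y. c * f y) x = c * \<delta> f x"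
proof -
  have "\<forall>f\<in>lipb. \<forall>g\<in>lipb. \<forall>a b::real. AE x in M. \<delta> (\<lambda>y. a * f y + b * g y) x = a * \<delta> f x + b * \<delta> g x"
    using assms unfolding linf_linear_op_def by blast
  from this[rule_format, OF assms(2) assms(2), of c 0] show ?thesis by simp
qed

lemma linf_meas: "linf_linear_op M \<delta> \<Longrightarrow> f \<in> lipb \<Longrightarrow> \<delta> f \<in> borel_measurable M \<and> (\<exists>B. AE x in M. \<bar>\<delta> f x\<bar> \<le> B)"
  unfolding linf_linear_op_def linf_def by auto

lemma deriv_seq:
  fixes \<delta> :: "('a::metric_space \<Rightarrow> real) \<Rightarrow> ('a \<Rightarrow> real)"
  shows "derivation M \<delta> \<Longrightarrow> seq_wstar_continuous M \<delta>"
  unfolding seq_wstar_continuous_def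
proof (intro allI impI)
  fix fs :: "nat \<Rightarrow> 'a \<Rightarrow> real" and f :: "'a \<Rightarrow> real" assume d: "derivation M \<delta>" and s: "lip_seq_wstar fs f"
  have "lip_bounded_wstar (filtermap fs sequentially) f"
    using s unfolding lip_seq_wstar_def lip_bounded_wstar_def
    by (auto simp: eventually_filtermap filterlim_filtermap intro: always_eventually)
  then have "linf_wstar M \<delta> (\<delta> f) (filtermap fs sequentially)"
    using d unfolding derivation_def by blast
  then show "linf_wstar M (\<lambda>i. \<delta> (fs i)) (\<delta> f) sequentially"
    unfolding linf_wstar_def by (simp add: filterlim_filtermap)
qed

lemma deriv_bounded:
  fixes \<delta> :: "('a::metric_space \<Rightarrow> real) \<Rightarrow> ('a \<Rightarrow> real)"
  assumes sf: "sigma_finite_measure M" and d: "derivation M \<delta>"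
  shows "bounded_op M \<delta>"
proof -
  have lin: "linf_linear_op M \<delta>" using d unfolding derivation_def by blast
  have sc: "seq_wstar_continuous M \<delta>" by (rule deriv_seq[OF d])
  define S where "S = {\<delta> f | f. f \<in> lipb \<and> lip_norm f \<le> 1}"
  have Sm: "\<forall>u\<in>S. u \<in> borel_measurable M \<and> (\<exists>B. AE x in M. \<bar>u x\<bar> \<le> B)"
    unfolding S_def using linf_meas[OF lin] by blast
  have Sw: "\<forall>h. integrable M h \<longrightarrow> (\<exists>K. \<forall>u\<in>S. \<bar>\<integral>x. u x * h x \<partial>M\<bar> \<le> K)"
  proof (intro allI impI)
    fix h :: "'a \<Rightarrow> real" assume hi: "integrable M h"
    have hm[measurable]: "h \<in> borel_measurable M" using hi by auto
    show "\<exists>K. \<forall>u\<in>S. \<bar>\<integral>x. u x * h x \<partial>M\<bar> \<le> K"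
    proof (rule ccontr)
      assume "\<not> ?thesis"
      then have "\<forall>n::nat. \<exists>f. f \<in> lipb \<and> lip_norm f \<le> 1 \<and> (real n + 1)^2 < \<bar>\<integral>x. \<delta> f x * h x \<partial>M\<bar>"
        unfolding S_def by (auto simp: not_le)
      then obtain fs where fs: "\<And>n. fs n \<in> lipb" "\<And>n. lip_norm (fs n) \<le> 1"
        "\<And>n. (real n + 1)^2 < \<bar>\<integral>x. \<delta> (fs n) x * h x \<partial>M\<bar>" by metis
      define gs where "gs n = (\<lambda>x. (1 / (real n + 1)) * fs n x)" for n
      have gl: "gs n \<in> lipb" for n unfolding gs_def by (rule scale_lipb[OF fs(1)])
      have gn: "lip_norm (gs n) \<le> 1" for n
      proof -
        have "lip_norm (gs n) \<le> (1 / (real n + 1)) * lip_norm (fs n)"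
          unfolding gs_def by (rule scale_lip_norm[OF fs(1)]) simp
        also have "\<dots> \<le> 1 * 1" using fs(2)[of n] lip_norm_ge3[OF fs(1)[of n]]
          by (intro mult_mono) auto
        finally show ?thesis by simp
      qed
      have gx: "(\<lambda>n. gs n x) \<longlonglongrightarrow> 0" for x
      proof (rule Lim_null_comparison[OF _ LIMSEQ_inverse_real_of_nat])
        show "\<forall>\<^sub>F n in sequentially. norm (gs n x) \<le> inverse (real (Suc n))"
        proof (intro always_eventually allI)
          fix n
          have "\<bar>fs n x\<bar> \<le> 1" using lip_norm_ge2[OF fs(1)[of n], of x] fs(2)[of n] by linarith
          then show "norm (gs n x) \<le> inverse (real (Suc n))"
            unfolding gs_def using mult_left_mono[of "\<bar>fs n x\<bar>" 1 "inverse (real n + 1)"] by (simp add: abs_mult divide_inverse add.commute)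
        qed
      qed
      have "lip_seq_wstar gs (\<lambda>_. 0)"
        unfolding lip_seq_wstar_def using gl zero_lipb gn gx by blast
      then have "linf_wstar M (\<lambda>i. \<delta> (gs i)) (\<delta> (\<lambda>_. 0)) sequentially"
        using sc unfolding seq_wstar_continuous_def by blast
      then have lim: "(\<lambda>i. \<integral>x. \<delta> (gs i) x * h x \<partial>M) \<longlonglongrightarrow> (\<integral>x. \<delta> (\<lambda>_. 0) x * h x \<partial>M)"
        using hi unfolding linf_wstar_def by blast
      have z: "(\<integral>x. \<delta> (\<lambda>_. 0) x * h x \<partial>M) = (\<integral>x. 0 \<partial>M)"
        by (rule integral_cong_AE) (use conjunct1[OF linf_meas[OF lin zero_lipb]] delta_zero[OF lin] in auto)
      have gi: "(\<integral>x. \<delta> (gs n) x * h x \<partial>M) = (1 / (real n + 1)) * (\<integral>x. \<delta> (fs n) x * h x \<partial>M)" for n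
      proof -
        have "(\<integral>x. \<delta> (gs n) x * h x \<partial>M) = (\<integral>x. (1 / (real n + 1)) * (\<delta> (fs n) x * h x) \<partial>M)"
        proof (rule integral_cong_AE)
          show "(\<lambda>x. \<delta> (gs n) x * h x) \<in> borel_measurable M" by (intro borel_measurable_times conjunct1[OF linf_meas[OF lin gl[of n]]] hm)
          show "(\<lambda>x. 1 / (real n + 1) * (\<delta> (fs n) x * h x)) \<in> borel_measurable M"
            by (intro borel_measurable_times borel_measurable_const conjunct1[OF linf_meas[OF lin fs(1)[of n]]] hm)
          show "AE x in M. \<delta> (gs n) x * h x = 1 / (real n + 1) * (\<delta> (fs n) x * h x)"
            using delta_scale[OF lin fs(1)[of n], of "1 / (real n + 1)"] unfolding gs_def
            by eventually_elim simp
        qed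
        then show ?thesis by simp
      qed
      have "eventually (\<lambda>i. dist (\<integral>x. \<delta> (gs i) x * h x \<partial>M) 0 < 1) sequentially"
        using lim z unfolding tendsto_iff by auto
      then obtain n where n: "\<bar>\<integral>x. \<delta> (gs n) x * h x \<partial>M\<bar> < 1"
        by (auto simp: eventually_sequentially dist_real_def)
      have "(real n + 1)^2 < \<bar>\<integral>x. \<delta> (fs n) x * h x \<partial>M\<bar>" by (rule fs(3))
      also have "\<bar>\<integral>x. \<delta> (fs n) x * h x \<partial>M\<bar> = (real n + 1) * \<bar>\<integral>x. \<delta> (gs n) x * h x \<partial>M\<bar>"
        unfolding gi by (simp add: abs_mult)
      also have "\<dots> \<le> (real n + 1) * 1" using n by (intro mult_left_mono) auto
      finally have "(real n + 1)^2 < real n + 1" by simp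
      then show False by (simp add: power2_eq_square)
    qed
  qed
  obtain C where C: "\<And>u. u \<in> S \<Longrightarrow> AE x in M. \<bar>u x\<bar> \<le> C" using UB[OF sf Sm Sw] by blast
  show ?thesis unfolding bounded_op_def
  proof (intro exI ballI)
    fix f :: "'a \<Rightarrow> real" assume f: "f \<in> lipb"
    show "AE x in M. \<bar>\<delta> f x\<bar> \<le> C * lip_norm f"
    proof (cases "lip_norm f = 0")
      case True
      then have "f = (\<lambda>_. 0)" using lip_norm_ge2[OF f] by (intro ext) (metis abs_le_zero_iff)
      then show ?thesis using delta_zero[OF lin] True by auto
    next
      case False
      define L where "L = lip_norm f"
      have L: "0 < L" using False lip_norm_ge3[OF f] unfolding L_def by linarith
      define g where "g = (\<lambda>x. (1 / L) * f x)"
      have "lip_norm g \<le> (1 / L) * lip_norm f" unfolding g_def by (rule scale_lip_norm[OF f]) (use L in simp)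
      then have "lip_norm g \<le> 1" using L unfolding L_def by simp
      then have "\<delta> g \<in> S" unfolding S_def g_def using scale_lipb[OF f] by blast
      then have "AE x in M. \<bar>\<delta> g x\<bar> \<le> C" by (rule C)
      then show ?thesis using delta_scale[OF lin f, of "1 / L"]
      proof eventually_elim
        fix x assume a: "\<bar>\<delta> g x\<bar> \<le> C" "\<delta> (\<lambda>y. 1 / L * f y) x = 1 / L * \<delta> f x"
        then have "\<bar>\<delta> f x\<bar> / L \<le> C" using L unfolding g_def by (simp add: abs_mult)
        then show "\<bar>\<delta> f x\<bar> \<le> C * lip_norm f" using L unfolding L_def by (simp add: pos_divide_le_eq)
      qed
    qed
  qed
qed

lemma net_cont:
  fixes \<delta> :: "('a::metric_space \<Rightarrow> real) \<Rightarrow> ('a \<Rightarrow> real)"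
  assumes sep: "separable_space (euclidean :: 'a topology)" and sc: "seq_wstar_continuous M \<delta>"
    and lb: "lip_bounded_wstar F f"
  shows "linf_wstar M \<delta> (\<delta> f) F"
  unfolding linf_wstar_def
proof (intro allI impI)
  fix h :: "'a \<Rightarrow> real" assume hi: "integrable M h"
  define \<phi> where "\<phi> g = (\<integral>x. \<delta> g x * h x \<partial>M)" for g
  show "((\<lambda>g. \<integral>x. \<delta> g x * h x \<partial>M) \<longlongrightarrow> (\<integral>x. \<delta> f x * h x \<partial>M)) F"
  proof (rule ccontr)
    assume "\<not> ?thesis"
    then obtain e where e: "0 < e" and fr: "frequently (\<lambda>g. \<not> dist (\<phi> g) (\<phi> f) < e) F"
      unfolding tendsto_iff \<phi>_def frequently_def by auto
    have fl: "f \<in> lipb" using lb unfolding lip_bounded_wstar_def by blast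
    obtain B where B: "eventually (\<lambda>g. g \<in> lipb \<and> lip_norm g \<le> B) F"
      using lb unfolding lip_bounded_wstar_def by blast
    have pw: "\<And>x. ((\<lambda>g. g x) \<longlongrightarrow> f x) F" using lb unfolding lip_bounded_wstar_def by blast
    obtain D :: "'a set" where D: "countable D" "closure D = UNIV"
      using sep unfolding separable_space_def by auto
    have Dne: "D \<noteq> {}" using D(2) by auto
    define d where "d = from_nat_into D"
    have rd: "range d = D" unfolding d_def using Dne D(1) by simp
    have "\<forall>n::nat. \<exists>g. (\<not> dist (\<phi> g) (\<phi> f) < e \<and> (g \<in> lipb \<and> lip_norm g \<le> B))
              \<and> (\<forall>k\<in>{..n}. \<bar>g (d k) - f (d k)\<bar> < 1 / (real n + 1))"
    proof
      fix n :: nat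
      have "eventually (\<lambda>g. \<forall>k\<in>{..n}. \<bar>g (d k) - f (d k)\<bar> < 1 / (real n + 1)) F"
      proof (rule eventually_ball_finite)
        show "\<forall>k\<in>{..n}. eventually (\<lambda>g. \<bar>g (d k) - f (d k)\<bar> < 1 / (real n + 1)) F"
          using pw unfolding tendsto_iff dist_real_def by auto
      qed simp
      then have "frequently (\<lambda>g. (\<not> dist (\<phi> g) (\<phi> f) < e \<and> (g \<in> lipb \<and> lip_norm g \<le> B))
              \<and> (\<forall>k\<in>{..n}. \<bar>g (d k) - f (d k)\<bar> < 1 / (real n + 1))) F"
        by (intro frequently_eventually_frequently[OF frequently_eventually_frequently[OF fr B]])
      then show "\<exists>g. (\<not> dist (\<phi> g) (\<phi> f) < e \<and> (g \<in> lipb \<and> lip_norm g \<le> B))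
              \<and> (\<forall>k\<in>{..n}. \<bar>g (d k) - f (d k)\<bar> < 1 / (real n + 1))"
        by (rule frequently_ex)
    qed
    then obtain gs where gs: "\<And>n. \<not> dist (\<phi> (gs n)) (\<phi> f) < e" "\<And>n. gs n \<in> lipb"
      "\<And>n. lip_norm (gs n) \<le> B" "\<And>n k. k \<le> n \<Longrightarrow> \<bar>gs n (d k) - f (d k)\<bar> < 1 / (real n + 1)"
      by (metis atMost_iff)
    have B0: "0 \<le> B" using lip_norm_ge3[OF gs(2)[of 0]] gs(3)[of 0] by linarith
    have conv: "(\<lambda>n. gs n x) \<longlonglongrightarrow> f x" for x
    proof (rule LIMSEQ_I)
      fix r :: real assume r: "0 < r"
      define Lf where "Lf = lip_norm f"
      have Lf: "0 \<le> Lf" unfolding Lf_def by (rule lip_norm_ge3[OF fl])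
      define \<eta> where "\<eta> = r / (3 * (B + Lf + 1))"
      have \<eta>: "0 < \<eta>" unfolding \<eta>_def using r B0 Lf by simp
      have "x \<in> closure D" using D(2) by simp
      then obtain y where y: "y \<in> D" "dist y x < \<eta>" using \<eta> unfolding closure_approachable by blast
      then obtain k where k: "y = d k" using rd by blast
      obtain N :: nat where N: "3 / r < real N" using reals_Archimedean2 by blast
      show "\<exists>no. \<forall>n\<ge>no. norm (gs n x - f x) < r"
      proof (intro exI allI impI)
        fix n assume n: "max k N \<le> n"
        have a1: "\<bar>gs n x - gs n y\<bar> \<le> B * \<eta>"
        proof -
          have "\<bar>gs n x - gs n y\<bar> \<le> lip_norm (gs n) * dist x y" by (rule lip_norm_ge1[OF gs(2)])
          also have "\<dots> \<le> B * \<eta>" using gs(3)[of n] y(2) B0 lip_norm_ge3[OF gs(2)[of n]]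
            by (intro mult_mono) (auto simp: dist_commute)
          finally show ?thesis .
        qed
        have a3: "\<bar>f y - f x\<bar> \<le> Lf * \<eta>"
        proof -
          have "\<bar>f y - f x\<bar> \<le> Lf * dist y x" unfolding Lf_def by (rule lip_norm_ge1[OF fl])
          also have "\<dots> \<le> Lf * \<eta>" using y(2) Lf by (intro mult_left_mono) auto
          finally show ?thesis .
        qed
        have a2: "\<bar>gs n y - f y\<bar> < r / 3"
        proof -
          have c1: "\<bar>gs n y - f y\<bar> < 1 / (real n + 1)" using gs(4)[of k n] n k by simp
          have "0 < 3 / r" using r by simp
          then have N0: "0 < real N" using N by linarith
          have c2: "1 / (real n + 1) \<le> 1 / real N"
            by (rule divide_left_mono) (use n N0 in auto)
          have N3: "3 < r * real N" using N r by (simp add: divide_less_eq mult.commute)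
          then have c3: "1 / real N < r / 3" using N0 by (simp add: field_simps)
          show ?thesis using c1 c2 c3 by linarith
        qed
        have bnd: "(B + Lf) * \<eta> \<le> r / 3"
        proof -
          have "(B + Lf) * \<eta> = r / 3 * ((B + Lf) / (B + Lf + 1))" unfolding \<eta>_def using B0 Lf by (simp add: field_simps)
          also have "\<dots> \<le> r / 3 * 1" using r B0 Lf by (intro mult_left_mono) auto
          finally show ?thesis by simp
        qed
        then have bnd': "B * \<eta> + Lf * \<eta> \<le> r / 3" by (simp add: distrib_right)
        have tri: "\<bar>gs n x - f x\<bar> \<le> \<bar>gs n x - gs n y\<bar> + \<bar>gs n y - f y\<bar> + \<bar>f y - f x\<bar>" by arith
        show "norm (gs n x - f x) < r" unfolding real_norm_def using tri a1 a2 a3 bnd' by linarith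
      qed
    qed
    have "lip_seq_wstar gs f" unfolding lip_seq_wstar_def using gs(2,3) fl conv by blast
    then have "linf_wstar M (\<lambda>i. \<delta> (gs i)) (\<delta> f) sequentially"
      using sc unfolding seq_wstar_continuous_def by blast
    then have "(\<lambda>i. \<phi> (gs i)) \<longlonglongrightarrow> \<phi> f" using hi unfolding linf_wstar_def \<phi>_def by blast
    then have "eventually (\<lambda>i. dist (\<phi> (gs i)) (\<phi> f) < e) sequentially" using e unfolding tendsto_iff by blast
    then obtain i where "dist (\<phi> (gs i)) (\<phi> f) < e" by (auto simp: eventually_sequentially)
    then show False using gs(1) by blast
  qed
qed

theorem lemma2p8:
  fixes M :: "'a::metric_space measure"
    and \<delta> :: "('a \<Rightarrow> real) \<Rightarrow> ('a \<Rightarrow> real)"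
  assumes "separable_space (euclidean :: 'a topology)"
    and "sets M = sets borel"
    and "sigma_finite_measure M"
    and "linf_linear_op M \<delta>"
  shows "(derivation M \<delta> \<longrightarrow> bounded_op M \<delta>) \<and>
         (derivation M \<delta> \<longleftrightarrow> leibniz M \<delta> \<and> seq_wstar_continuous M \<delta>)"
proof (rule conjI)
  show "derivation M \<delta> \<longrightarrow> bounded_op M \<delta>"
    using deriv_bounded[OF assms(3)] by blast
  show "derivation M \<delta> \<longleftrightarrow> leibniz M \<delta> \<and> seq_wstar_continuous M \<delta>"
  proof
    assume d: "derivation M \<delta>"
    then show "leibniz M \<delta> \<and> seq_wstar_continuous M \<delta>"
      using deriv_seq[OF d] unfolding derivation_def by blast
  next
    assume a: "leibniz M \<delta> \<and> seq_wstar_continuous M \<delta>"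
    then show "derivation M \<delta>" unfolding derivation_def
      using assms(4) net_cont[OF assms(1)] by blast
  qed
qed

end
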